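(* There exist five distinct points $p_1,\dots,p_5$ in the plane (not necessarily in general position) such that there is no family $K_1,\dots,K_5$ of pairwise intersecting compact convex sets in the plane with $o(K_iK_jK_k)=o(p_ip_jp_k)$ for all distinct $i,j,k\in\{1,\dots,5\}$.
   Context: For points $p,q,r$ in the plane, $o(pqr)\in\{+1,0,-1\}$ is $+1$ if $p,q,r$ form a counterclockwise triangle, $-1$ if clockwise, and $0$ if they are collinear. For three pairwise intersecting compact convex sets $A,B,C$ in the plane: if $A\cap B\cap C\neq\emptyset$ then $o(ABC)=0$; otherwise $o(ABC)=o(xyz)$ for any $x\in B\cap C$, $y\in A\cap C$, $z\in A\cap B$ (this orientation is known not to depend on the choice of $x,y,z$, and is nonzero). *)

theory Defs
  imports "HOL-Analysis.Analysis"
begin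

definition orient :: "real \<times> real \<Rightarrow> real \<times> real \<Rightarrow> real \<times> real \<Rightarrow> int" where
  "orient p q r =
     (let d = (fst q - fst p) * (snd r - snd p) - (snd q - snd p) * (fst r - fst p)
      in if d > 0 then 1 else if d < 0 then -1 else 0)"

text \<open>Orientation of three pairwise intersecting compact convex sets: 0 if they have a
  common point; otherwise o(xyz) for (any) x in B \<inter> C, y in A \<inter> C, z in A \<inter> B
  (the choice does not matter by a known fact; we pick some points via Hilbert choice).\<close>

definition set_orient :: "(real \<times> real) set \<Rightarrow> (real \<times> real) set \<Rightarrow> (real \<times> real) set \<Rightarrow> int" where
  "set_orient A B C =
     (if A \<inter> B \<inter> C \<noteq> {} then 0
      else orient (SOME x. x \<in> B \<inter> C) (SOME y. y \<in> A \<inter> C) (SOME z. z \<in> A \<inter> B))"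

end

theory Submission imports Defs begin

definition D :: "real \<times> real \<Rightarrow> real \<times> real \<Rightarrow> real \<times> real \<Rightarrow> real" where
  "D p q r = (fst q - fst p) * (snd r - snd p) - (snd q - snd p) * (fst r - fst p)"

lemma orient_D: "orient p q r = (if D p q r > 0 then 1 else if D p q r < 0 then -1 else 0)"
  unfolding orient_def D_def Let_def by simp

lemma D_cyc: "D p q r = D q r p" unfolding D_def by algebra
lemma D_swap: "D p r q = - D p q r" unfolding D_def by algebra
lemma D_same: "D p q p = 0" "D p q q = 0" unfolding D_def by simp_all

lemma D_aff:
  assumes "s + t = 1"
  shows "D p q (s *\<^sub>R x + t *\<^sub>R y) = s * D p q x + t * D p q y"
proof -
  have "t = 1 - s" using assms by simp
  show ?thesis unfolding D_def \<open>t = 1 - s\<close> by (simp add: algebra_simps)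
qed

lemma D_comb:
  assumes "\<alpha> + \<beta> \<noteq> 0"
  shows "D p q ((1/(\<alpha>+\<beta>)) *\<^sub>R (\<alpha> *\<^sub>R x + \<beta> *\<^sub>R y)) = (\<alpha> * D p q x + \<beta> * D p q y)/(\<alpha>+\<beta>)"
proof -
  have e: "(1/(\<alpha>+\<beta>)) *\<^sub>R (\<alpha> *\<^sub>R x + \<beta> *\<^sub>R y) = (\<alpha>/(\<alpha>+\<beta>)) *\<^sub>R x + (\<beta>/(\<alpha>+\<beta>)) *\<^sub>R y"
    by (simp add: scaleR_add_right)
  have "(\<alpha>/(\<alpha>+\<beta>)) + (\<beta>/(\<alpha>+\<beta>)) = 1" using assms by (simp add: add_divide_distrib[symmetric])
  then show ?thesis unfolding e by (simp add: D_aff add_divide_distrib)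
qed

lemma conv2:
  assumes "convex S" "x \<in> S" "y \<in> S" "\<alpha> \<ge> 0" "\<beta> \<ge> 0" "\<alpha> + \<beta> > 0"
  shows "(1/(\<alpha>+\<beta>)) *\<^sub>R (\<alpha> *\<^sub>R x + \<beta> *\<^sub>R y) \<in> S"
proof -
  have "(1/(\<alpha>+\<beta>)) *\<^sub>R (\<alpha> *\<^sub>R x + \<beta> *\<^sub>R y) = (\<alpha>/(\<alpha>+\<beta>)) *\<^sub>R x + (\<beta>/(\<alpha>+\<beta>)) *\<^sub>R y"
    by (simp add: scaleR_add_right)
  moreover have "(\<alpha>/(\<alpha>+\<beta>)) + (\<beta>/(\<alpha>+\<beta>)) = 1" using assms(6) by (simp add: add_divide_distrib[symmetric])
  ultimately show ?thesis using assms convexD[of S x y "\<alpha>/(\<alpha>+\<beta>)" "\<beta>/(\<alpha>+\<beta>)"] by simp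
qed

lemma tri_mem:
  assumes "convex A" "a \<in> A" "b \<in> A" "c \<in> A" "D a b c > 0"
    "D a b p \<ge> 0" "D b c p \<ge> 0" "D c a p \<ge> 0"
  shows "p \<in> A"
proof -
  let ?d = "D a b c"
  have sum: "D b c p / ?d + D c a p / ?d + D a b p / ?d = 1"
  proof -
    have "D b c p + D c a p + D a b p = ?d" unfolding D_def by algebra
    then show ?thesis using assms(5) by (simp add: add_divide_distrib[symmetric])
  qed
  have c1: "?d * fst p = D b c p * fst a + D c a p * fst b + D a b p * fst c"
    unfolding D_def by algebra
  have c2: "?d * snd p = D b c p * snd a + D c a p * snd b + D a b p * snd c"
    unfolding D_def by algebra
  have eq: "p = (D b c p / ?d) *\<^sub>R a + (D c a p / ?d) *\<^sub>R b + (D a b p / ?d) *\<^sub>R c"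
  proof (rule prod_eqI)
    show "fst p = fst ((D b c p / ?d) *\<^sub>R a + (D c a p / ?d) *\<^sub>R b + (D a b p / ?d) *\<^sub>R c)"
      using c1 assms(5) by (simp add: field_simps)
    show "snd p = snd ((D b c p / ?d) *\<^sub>R a + (D c a p / ?d) *\<^sub>R b + (D a b p / ?d) *\<^sub>R c)"
      using c2 assms(5) by (simp add: field_simps)
  qed
  have "p \<in> convex hull {a,b,c}"
    unfolding convex_hull_3 using sum eq assms(6-8) assms(5)
    by (intro CollectI exI[of _ "D b c p / ?d"] exI[of _ "D c a p / ?d"] exI[of _ "D a b p / ?d"]) simp
  moreover have "convex hull {a,b,c} \<subseteq> A" using assms(1-4) by (intro hull_minimal) auto
  ultimately show ?thesis by blast
qed


lemma sign_const:
  assumes "convex S" "a \<in> S" "b \<in> S" "\<forall>w\<in>S. D p q w \<noteq> 0" "D p q a > 0"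
  shows "D p q b > 0"
proof (rule ccontr)
  assume "\<not> D p q b > 0"
  then have nb: "D p q b < 0" using assms(3,4) by force
  define \<alpha> where "\<alpha> = - D p q b"
  define \<beta> where "\<beta> = D p q a"
  have pos: "\<alpha> + \<beta> > 0" using nb assms(5) unfolding \<alpha>_def \<beta>_def by simp
  have "(1/(\<alpha>+\<beta>)) *\<^sub>R (\<alpha> *\<^sub>R a + \<beta> *\<^sub>R b) \<in> S"
  proof (rule conv2[OF assms(1-3)])
    show "0 \<le> \<alpha>" "0 \<le> \<beta>" "0 < \<alpha> + \<beta>" using nb assms(5) pos unfolding \<alpha>_def \<beta>_def by auto
  qed
  moreover have "D p q ((1/(\<alpha>+\<beta>)) *\<^sub>R (\<alpha> *\<^sub>R a + \<beta> *\<^sub>R b)) = 0"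
    using D_comb[of \<alpha> \<beta> p q a b] pos unfolding \<alpha>_def \<beta>_def by simp
  ultimately show False using assms(4) by blast
qed

lemma nonzero:
  assumes "convex A" "convex B" "convex C" "A \<inter> B \<inter> C = {}"
    "x \<in> B" "x \<in> C" "y \<in> A" "y \<in> C" "z \<in> A" "z \<in> B"
  shows "D x y z \<noteq> 0"
proof
  assume h: "D x y z = 0"
  have xy: "x \<noteq> y" using assms by blast
  obtain t where h1: "fst z = fst x + t * (fst y - fst x)" and h2: "snd z = snd x + t * (snd y - snd x)"
  proof (cases "fst y = fst x")
    case True
    then have "snd y \<noteq> snd x" using xy by (simp add: prod_eq_iff)
    define t where "t = (snd z - snd x) / (snd y - snd x)"
    have "fst z = fst x + t * (fst y - fst x)"
      using h True \<open>snd y \<noteq> snd x\<close> unfolding D_def by simp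
    moreover have "snd z = snd x + t * (snd y - snd x)"
      using \<open>snd y \<noteq> snd x\<close> unfolding t_def by simp
    ultimately show ?thesis using that by blast
  next
    case False
    define t where "t = (fst z - fst x) / (fst y - fst x)"
    have "fst z = fst x + t * (fst y - fst x)" using False unfolding t_def by simp
    moreover have "snd z = snd x + t * (snd y - snd x)"
    proof -
      have "(fst y - fst x) * (snd z - snd x) = (snd y - snd x) * (fst z - fst x)"
        using h unfolding D_def by simp
      then show ?thesis using False unfolding t_def by (simp add: field_simps)
    qed
    ultimately show ?thesis using that by blast
  qed
  consider "0 \<le> t" "t \<le> 1" | "t > 1" | "t < 0" by linarith
  then show False
  proof cases
    case 1
    have "z = (1 - t) *\<^sub>R x + t *\<^sub>R y"
      using h1 h2 by (simp add: prod_eq_iff algebra_simps)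
    then have "z \<in> C" using convexD[OF assms(3) assms(6) assms(8), of "1-t" t] 1 by simp
    then show False using assms by blast
  next
    case 2
    have "y = (1 - 1/t) *\<^sub>R x + (1/t) *\<^sub>R z"
      using h1 h2 2 by (simp add: prod_eq_iff field_simps)
    then have "y \<in> B" using convexD[OF assms(2) assms(5) assms(10), of "1-1/t" "1/t"] 2 by simp
    then show False using assms by blast
  next
    case 3
    have nz: "1 - t \<noteq> 0" using 3 by simp
    have e1: "(1 - t) * fst x = fst z - t * fst y" "(1 - t) * snd x = snd z - t * snd y"
      using h1 h2 by (simp_all add: algebra_simps)
    have "fst x = (1/(1-t)) * fst z + (-t/(1-t)) * fst y"
    proof -
      have "fst x = (fst z - t * fst y) / (1 - t)" using e1(1) nz by (simp add: eq_divide_eq mult.commute)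
      then show ?thesis by (simp add: diff_divide_distrib)
    qed
    moreover have "snd x = (1/(1-t)) * snd z + (-t/(1-t)) * snd y"
    proof -
      have "snd x = (snd z - t * snd y) / (1 - t)" using e1(2) nz by (simp add: eq_divide_eq mult.commute)
      then show ?thesis by (simp add: diff_divide_distrib)
    qed
    ultimately have "x = (1/(1-t)) *\<^sub>R z + (-t/(1-t)) *\<^sub>R y"
      by (simp add: prod_eq_iff)
    moreover have "1/(1-t) + (-t/(1-t)) = 1" using 3 by (simp add: field_simps)
    moreover have "t/(1-t) \<le> 0" using 3 by (simp add: divide_nonpos_pos)
    ultimately have "x \<in> A" using convexD[OF assms(1) assms(9) assms(7), of "1/(1-t)" "-t/(1-t)"] 3 by simp
    then show False using assms by blast
  qed
qed

lemma set_orient_eq: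
  assumes "convex A" "convex B" "convex C" "A \<inter> B \<inter> C = {}"
    "x \<in> B \<inter> C" "y \<in> A \<inter> C" "z \<in> A \<inter> B"
  shows "set_orient A B C = orient x y z"
proof -
  define x0 where "x0 = (SOME x. x \<in> B \<inter> C)"
  define y0 where "y0 = (SOME y. y \<in> A \<inter> C)"
  define z0 where "z0 = (SOME z. z \<in> A \<inter> B)"
  have x0: "x0 \<in> B \<inter> C" unfolding x0_def using assms(5) by (rule someI)
  have y0: "y0 \<in> A \<inter> C" unfolding y0_def using assms(6) by (rule someI)
  have z0: "z0 \<in> A \<inter> B" unfolding z0_def using assms(7) by (rule someI)
  have so: "set_orient A B C = orient x0 y0 z0"
    unfolding set_orient_def x0_def y0_def z0_def using assms(4) by simp
  have nz: "D x' y' z' \<noteq> 0" if "x' \<in> B \<inter> C" "y' \<in> A \<inter> C" "z' \<in> A \<inter> B" for x' y' z'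
    using nonzero[OF assms(1-4)] that by blast
  have cB: "convex (B \<inter> C)" "convex (A \<inter> C)" "convex (A \<inter> B)"
    using assms(1-3) by (auto intro: convex_Int)
  have step1: "D x0 y0 z0 > 0 \<longleftrightarrow> D x y0 z0 > 0"
  proof -
    have "\<forall>w\<in>B \<inter> C. D y0 z0 w \<noteq> 0" using nz y0 z0 D_cyc by metis
    then have "D y0 z0 x0 > 0 \<longleftrightarrow> D y0 z0 x > 0"
      using sign_const[OF cB(1) x0 assms(5)] sign_const[OF cB(1) assms(5) x0] by blast
    then show ?thesis using D_cyc by metis
  qed
  have step2: "D x y0 z0 > 0 \<longleftrightarrow> D x y z0 > 0"
  proof -
    have "\<forall>w\<in>A \<inter> C. D z0 x w \<noteq> 0" using nz assms(5) z0 D_cyc by metis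
    then have "D z0 x y0 > 0 \<longleftrightarrow> D z0 x y > 0"
      using sign_const[OF cB(2) y0 assms(6)] sign_const[OF cB(2) assms(6) y0] by blast
    then show ?thesis using D_cyc by metis
  qed
  have step3: "D x y z0 > 0 \<longleftrightarrow> D x y z > 0"
  proof -
    have "\<forall>w\<in>A \<inter> B. D x y w \<noteq> 0" using nz assms(5) assms(6) by metis
    then show ?thesis
      using sign_const[OF cB(3) z0 assms(7)] sign_const[OF cB(3) assms(7) z0] by blast
  qed
  have "D x0 y0 z0 \<noteq> 0" "D x y z \<noteq> 0" using nz x0 y0 z0 assms(5-7) by auto
  then show ?thesis unfolding so orient_D using step1 step2 step3 by auto
qed

lemma set_orient_zero:
  assumes "convex A" "convex B" "convex C" "A \<inter> B \<noteq> {}" "A \<inter> C \<noteq> {}" "B \<inter> C \<noteq> {}"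
    "set_orient A B C = 0"
  shows "A \<inter> B \<inter> C \<noteq> {}"
proof
  assume e: "A \<inter> B \<inter> C = {}"
  obtain x y z where "x \<in> B \<inter> C" "y \<in> A \<inter> C" "z \<in> A \<inter> B" using assms(4-6) by blast
  then have "set_orient A B C = orient x y z" "D x y z \<noteq> 0"
    using set_orient_eq[OF assms(1-3) e] nonzero[OF assms(1-3) e] by auto
  then show False using assms(7) unfolding orient_D by (auto split: if_splits)
qed

lemma set_orient_nz: "set_orient A B C \<noteq> 0 \<Longrightarrow> A \<inter> B \<inter> C = {}"
  unfolding set_orient_def by (simp split: if_splits)


lemma pos_of_mult: "(x::real) * y > 0 \<Longrightarrow> y > 0 \<Longrightarrow> x > 0"
  by (simp add: zero_less_mult_iff)

lemma empty_lemma: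
  assumes "convex A" "convex B" "convex C"
    "u \<in> A" "b \<in> A" "a1 \<in> A" "v \<in> B" "b \<in> B" "a2 \<in> B" "u \<in> C" "v \<in> C"
    "D u v b < 0" "D u v a1 > 0" "D u v a2 > 0" "D v a1 b > 0" "D u a2 b < 0"
    "A \<inter> B \<inter> C = {}"
  shows "D b a1 a2 < 0"
proof (rule ccontr)
  assume "\<not> ?thesis"
  then have h: "D b a1 a2 \<ge> 0" by simp
  define \<alpha> where "\<alpha> = D u v a2"
  define \<beta> where "\<beta> = - D u v b"
  define \<gamma> where "\<gamma> = D u b a2"
  define \<delta> where "\<delta> = - D v b a2"
  define X where "X = (1/(\<alpha>+\<beta>)) *\<^sub>R (\<alpha> *\<^sub>R b + \<beta> *\<^sub>R a2)"
  have S: "\<alpha> + \<beta> > 0" "\<alpha> \<ge> 0" "\<beta> \<ge> 0" using assms(12,14) unfolding \<alpha>_def \<beta>_def by auto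
  have ub: "D u b a2 > 0" using assms(16) D_swap[of u b a2] by simp
  have ba2u: "D b a2 u > 0" using ub D_cyc[of u b a2] by simp
  have bva1: "D b v a1 > 0" using assms(15) D_cyc[of b v a1] by simp
  have id2: "D b v a2 * (D u v a1 - D u v b) = (- D u v b) * D b a1 a2 + (D u v a2 - D u v b) * D b v a1"
    unfolding D_def by (simp add: algebra_simps)
  have nn: "(- D u v b) * D b a1 a2 \<ge> 0" by (rule mult_nonneg_nonneg) (use assms(12) h in auto)
  have "(D u v a2 - D u v b) * D b v a1 > 0" by (rule mult_pos_pos) (use assms(12,14) bva1 in auto)
  with nn have "D b v a2 * (D u v a1 - D u v b) > 0" unfolding id2 by (rule add_nonneg_pos)
  then have bva2: "D b v a2 > 0" by (rule pos_of_mult) (use assms(12,13) in auto)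
  have vb: "D v b a2 < 0" using bva2 D_cyc[of v b a2] D_swap[of b v a2] by simp
  have id1: "D b a1 u * (D u v a2 - D u v b) = (D u v a1 - D u v b) * D b a2 u + (- D u v b) * D b a1 a2"
    unfolding D_def by (simp add: algebra_simps)
  have "(D u v a1 - D u v b) * D b a2 u > 0" by (rule mult_pos_pos) (use assms(12,13) ba2u in auto)
  then have "D b a1 u * (D u v a2 - D u v b) > 0" unfolding id1 using nn by (rule add_pos_nonneg)
  then have ba1u: "D b a1 u > 0" by (rule pos_of_mult) (use assms(12,14) in auto)
  have idE: "D u v a2 * D a1 u b - D u v b * D a1 u a2 = D u v a1 * D u b a2"
    unfolding D_def by (simp add: algebra_simps)
  have idX: "\<alpha> *\<^sub>R b + \<beta> *\<^sub>R a2 = \<gamma> *\<^sub>R v + \<delta> *\<^sub>R u"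
  proof (rule prod_eqI)
    show "fst (\<alpha> *\<^sub>R b + \<beta> *\<^sub>R a2) = fst (\<gamma> *\<^sub>R v + \<delta> *\<^sub>R u)"
      unfolding \<alpha>_def \<beta>_def \<gamma>_def \<delta>_def D_def by (simp add: algebra_simps)
    show "snd (\<alpha> *\<^sub>R b + \<beta> *\<^sub>R a2) = snd (\<gamma> *\<^sub>R v + \<delta> *\<^sub>R u)"
      unfolding \<alpha>_def \<beta>_def \<gamma>_def \<delta>_def D_def by (simp add: algebra_simps)
  qed
  have idS: "\<alpha> + \<beta> = \<gamma> + \<delta>" unfolding \<alpha>_def \<beta>_def \<gamma>_def \<delta>_def D_def by (simp add: algebra_simps)
  have XB: "X \<in> B" unfolding X_def by (rule conv2[OF assms(2) assms(8) assms(9) S(2) S(3) S(1)])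
  have XC: "X \<in> C"
  proof -
    have "X = (1/(\<gamma>+\<delta>)) *\<^sub>R (\<gamma> *\<^sub>R v + \<delta> *\<^sub>R u)" unfolding X_def idX idS ..
    moreover have "(1/(\<gamma>+\<delta>)) *\<^sub>R (\<gamma> *\<^sub>R v + \<delta> *\<^sub>R u) \<in> C"
      by (rule conv2[OF assms(3) assms(11) assms(10)]) (use ub vb S(1) idS in \<open>auto simp: \<gamma>_def \<delta>_def\<close>)
    ultimately show ?thesis by simp
  qed
  have XA: "X \<in> A"
  proof (rule tri_mem[OF assms(1) assms(5) assms(6) assms(4) ba1u])
    have ne: "\<alpha> + \<beta> \<noteq> 0" using S by simp
    show "D b a1 X \<ge> 0" unfolding X_def D_comb[OF ne] D_same
      by (intro divide_nonneg_pos) (use S h in auto)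
    show "D u b X \<ge> 0" unfolding X_def D_comb[OF ne] D_same
      by (intro divide_nonneg_pos) (use S ub in auto)
    have e: "\<alpha> * D a1 u b + \<beta> * D a1 u a2 = D u v a1 * D u b a2"
      using idE unfolding \<alpha>_def \<beta>_def by simp
    have "D u v a1 * D u b a2 > 0" by (rule mult_pos_pos) (use assms(13) ub in auto)
    then show "D a1 u X \<ge> 0" unfolding X_def D_comb[OF ne] e
      by (intro divide_nonneg_pos) (use S in auto)
  qed
  show False using XA XB XC assms(17) by blast
qed

lemma final_lemma:
  assumes "D u v a1 > 0" "D u v a2 > 0" "D u v b1 < 0" "D u v b2 < 0"
    "D b1 a1 a2 < 0" "D b2 a2 a1 < 0" "D a1 b2 b1 < 0" "D a2 b1 b2 < 0"
  shows False
proof -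
  define L where "L = (- D a2 b1 b2) * D u v a1 + (- D a1 b2 b1) * D u v a2"
  define R where "R = (- D b2 a2 a1) * D u v b1 + (- D b1 a1 a2) * D u v b2"
  have id: "L = R"
    unfolding L_def R_def D_def by (simp add: algebra_simps)
  have p1: "(- D a2 b1 b2) * D u v a1 > 0" by (rule mult_pos_pos) (use assms in auto)
  have p2: "(- D a1 b2 b1) * D u v a2 > 0" by (rule mult_pos_pos) (use assms in auto)
  have n1: "(- D b2 a2 a1) * D u v b1 < 0" by (rule mult_pos_neg) (use assms in auto)
  have n2: "(- D b1 a1 a2) * D u v b2 < 0" by (rule mult_pos_neg) (use assms in auto)
  have "L > 0" unfolding L_def using p1 p2 by (rule add_pos_pos)
  moreover have "R < 0" unfolding R_def using n1 n2 by (rule add_neg_neg)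
  ultimately show False using id by simp
qed


lemma D_eqs: "D q r p = D p q r" "D r p q = D p q r" "D p r q = - D p q r"
  "D q p r = - D p q r" "D r q p = - D p q r"
  unfolding D_def by (simp_all add: algebra_simps)

lemma orient_pos: "orient p q r = 1 \<Longrightarrow> D p q r > 0"
  unfolding orient_D by (auto split: if_splits)
lemma orient_neg: "orient p q r = -1 \<Longrightarrow> D p q r < 0"
  unfolding orient_D by (auto split: if_splits)

definition Pt :: "nat \<Rightarrow> real \<times> real" where
  "Pt = (\<lambda>i. if i = 1 then (0,0) else if i = 2 then (1,0) else if i = 3 then (-1,0)
              else if i = 4 then (0,1) else (0,-1))"

lemma Pt_inj: "inj_on Pt {1..5}"
proof (rule inj_onI)
  fix x y assume "x \<in> {1..5}" "y \<in> {1..5}" "Pt x = Pt y"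
  then show "x = y" unfolding Pt_def
    by (simp split: if_splits add: prod_eq_iff)
qed

theorem theorem2:
  shows "\<exists>p :: nat \<Rightarrow> real \<times> real. inj_on p {1..5} \<and>
    \<not> (\<exists>K :: nat \<Rightarrow> (real \<times> real) set.
          (\<forall>i\<in>{1..5}. compact (K i) \<and> convex (K i)) \<and>
          (\<forall>i\<in>{1..5}. \<forall>j\<in>{1..5}. i \<noteq> j \<longrightarrow> K i \<inter> K j \<noteq> {}) \<and>
          (\<forall>i\<in>{1..5}. \<forall>j\<in>{1..5}. \<forall>k\<in>{1..5}.
             i \<noteq> j \<and> j \<noteq> k \<and> i \<noteq> k \<longrightarrow>
             set_orient (K i) (K j) (K k) = orient (p i) (p j) (p k)))"
proof -
  define P where "P = Pt"
  have inj: "inj_on P {1..5}" unfolding P_def by (rule Pt_inj)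
  have nK: "\<not> (\<exists>K :: nat \<Rightarrow> (real \<times> real) set.
          (\<forall>i\<in>{1..5}. compact (K i) \<and> convex (K i)) \<and>
          (\<forall>i\<in>{1..5}. \<forall>j\<in>{1..5}. i \<noteq> j \<longrightarrow> K i \<inter> K j \<noteq> {}) \<and>
          (\<forall>i\<in>{1..5}. \<forall>j\<in>{1..5}. \<forall>k\<in>{1..5}.
             i \<noteq> j \<and> j \<noteq> k \<and> i \<noteq> k \<longrightarrow>
             set_orient (K i) (K j) (K k) = orient (P i) (P j) (P k)))"
  proof (rule notI, elim exE conjE)
    fix K :: "nat \<Rightarrow> (real \<times> real) set"
    assume cc: "\<forall>i\<in>{1..5}. compact (K i) \<and> convex (K i)" and
      pw: "\<forall>i\<in>{1..5}. \<forall>j\<in>{1..5}. i \<noteq> j \<longrightarrow> K i \<inter> K j \<noteq> {}" and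
      orr: "\<forall>i\<in>{1..5}. \<forall>j\<in>{1..5}. \<forall>k\<in>{1..5}.
             i \<noteq> j \<and> j \<noteq> k \<and> i \<noteq> k \<longrightarrow>
             set_orient (K i) (K j) (K k) = orient (P i) (P j) (P k)"
    have c1: "convex (K 1)" and c2: "convex (K 2)" and c3: "convex (K 3)"
      and c4: "convex (K 4)" and c5: "convex (K 5)" using cc by auto
    have pw': "K i \<inter> K j \<noteq> {}" if "i \<in> {1..5}" "j \<in> {1..5}" "i \<noteq> j" for i j
      using pw[rule_format, OF that(1) that(2)] that(3) by simp
    have so: "set_orient (K i) (K j) (K k) = orient (P i) (P j) (P k)"
      if "i \<in> {1..5}" "j \<in> {1..5}" "k \<in> {1..5}" "i \<noteq> j" "j \<noteq> k" "i \<noteq> k" for i j k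
      using orr[rule_format, OF that(1) that(2) that(3)] that(4-6) by simp
    have o123: "set_orient (K 1) (K 2) (K 3) = 0" using so[of 1 2 3] by (simp add: P_def Pt_def orient_def)
    have o145: "set_orient (K 1) (K 4) (K 5) = 0" using so[of 1 4 5] by (simp add: P_def Pt_def orient_def)
    have o124: "set_orient (K 1) (K 2) (K 4) = 1" using so[of 1 2 4] by (simp add: P_def Pt_def orient_def)
    have o125: "set_orient (K 1) (K 2) (K 5) = -1" using so[of 1 2 5] by (simp add: P_def Pt_def orient_def)
    have o134: "set_orient (K 1) (K 3) (K 4) = -1" using so[of 1 3 4] by (simp add: P_def Pt_def orient_def)
    have o135: "set_orient (K 1) (K 3) (K 5) = 1" using so[of 1 3 5] by (simp add: P_def Pt_def orient_def)
    have o234: "set_orient (K 2) (K 3) (K 4) = -1" using so[of 2 3 4] by (simp add: P_def Pt_def orient_def)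
    have o235: "set_orient (K 2) (K 3) (K 5) = 1" using so[of 2 3 5] by (simp add: P_def Pt_def orient_def)
    have o245: "set_orient (K 2) (K 4) (K 5) = 1" using so[of 2 4 5] by (simp add: P_def Pt_def orient_def)
    have o345: "set_orient (K 3) (K 4) (K 5) = -1" using so[of 3 4 5] by (simp add: P_def Pt_def orient_def)
    have p12: "K 1 \<inter> K 2 \<noteq> {}" using pw'[of 1 2] by simp
    have p13: "K 1 \<inter> K 3 \<noteq> {}" using pw'[of 1 3] by simp
    have p14: "K 1 \<inter> K 4 \<noteq> {}" using pw'[of 1 4] by simp
    have p15: "K 1 \<inter> K 5 \<noteq> {}" using pw'[of 1 5] by simp
    have p23: "K 2 \<inter> K 3 \<noteq> {}" using pw'[of 2 3] by simp
    have p24: "K 2 \<inter> K 4 \<noteq> {}" using pw'[of 2 4] by simp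
    have p25: "K 2 \<inter> K 5 \<noteq> {}" using pw'[of 2 5] by simp
    have p34: "K 3 \<inter> K 4 \<noteq> {}" using pw'[of 3 4] by simp
    have p35: "K 3 \<inter> K 5 \<noteq> {}" using pw'[of 3 5] by simp
    have p45: "K 4 \<inter> K 5 \<noteq> {}" using pw'[of 4 5] by simp
    obtain u where u: "u \<in> K 1" "u \<in> K 2" "u \<in> K 3"
      using set_orient_zero[OF c1 c2 c3 p12 p13 p23 o123] by blast
    obtain v where v: "v \<in> K 1" "v \<in> K 4" "v \<in> K 5"
      using set_orient_zero[OF c1 c4 c5 p14 p15 p45 o145] by blast
    obtain c24 where c24: "c24 \<in> K 2" "c24 \<in> K 4" using p24 by blast
    obtain c25 where c25: "c25 \<in> K 2" "c25 \<in> K 5" using p25 by blast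
    obtain c34 where c34: "c34 \<in> K 3" "c34 \<in> K 4" using p34 by blast
    obtain c35 where c35: "c35 \<in> K 3" "c35 \<in> K 5" using p35 by blast
    have E124: "K 1 \<inter> K 2 \<inter> K 4 = {}" by (rule set_orient_nz) (unfold o124, simp)
    have E125: "K 1 \<inter> K 2 \<inter> K 5 = {}" by (rule set_orient_nz) (unfold o125, simp)
    have E134: "K 1 \<inter> K 3 \<inter> K 4 = {}" by (rule set_orient_nz) (unfold o134, simp)
    have E135: "K 1 \<inter> K 3 \<inter> K 5 = {}" by (rule set_orient_nz) (unfold o135, simp)
    have E234: "K 2 \<inter> K 3 \<inter> K 4 = {}" by (rule set_orient_nz) (unfold o234, simp)
    have E235: "K 2 \<inter> K 3 \<inter> K 5 = {}" by (rule set_orient_nz) (unfold o235, simp)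
    have E245: "K 2 \<inter> K 4 \<inter> K 5 = {}" by (rule set_orient_nz) (unfold o245, simp)
    have E345: "K 3 \<inter> K 4 \<inter> K 5 = {}" by (rule set_orient_nz) (unfold o345, simp)
    have F1: "D c24 v u > 0"
    proof (rule orient_pos)
      show "orient c24 v u = 1" using set_orient_eq[OF c1 c2 c4 E124, of c24 v u] o124 c24 u v by simp
    qed
    have F2: "D c25 v u < 0"
    proof (rule orient_neg)
      show "orient c25 v u = -1" using set_orient_eq[OF c1 c2 c5 E125, of c25 v u] o125 c25 u v by simp
    qed
    have F3: "D c34 v u < 0"
    proof (rule orient_neg)
      show "orient c34 v u = -1" using set_orient_eq[OF c1 c3 c4 E134, of c34 v u] o134 c34 u v by simp
    qed
    have F4: "D c35 v u > 0"
    proof (rule orient_pos)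
      show "orient c35 v u = 1" using set_orient_eq[OF c1 c3 c5 E135, of c35 v u] o135 c35 u v by simp
    qed
    have F5: "D c34 c24 u < 0"
    proof (rule orient_neg)
      show "orient c34 c24 u = -1" using set_orient_eq[OF c2 c3 c4 E234, of c34 c24 u] o234 c34 c24 u by simp
    qed
    have F6: "D c35 c25 u > 0"
    proof (rule orient_pos)
      show "orient c35 c25 u = 1" using set_orient_eq[OF c2 c3 c5 E235, of c35 c25 u] o235 c35 c25 u by simp
    qed
    have F7: "D v c25 c24 > 0"
    proof (rule orient_pos)
      show "orient v c25 c24 = 1" using set_orient_eq[OF c2 c4 c5 E245, of v c25 c24] o245 v c25 c24 by simp
    qed
    have F8: "D v c35 c34 < 0"
    proof (rule orient_neg)
      show "orient v c35 c34 = -1" using set_orient_eq[OF c3 c4 c5 E345, of v c35 c34] o345 v c35 c34 by simp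
    qed
    have d24: "D u v c24 < 0" using F1 D_eqs(5)[of c24 v u] by linarith
    have d25: "D u v c25 > 0" using F2 D_eqs(5)[of c25 v u] by linarith
    have d34: "D u v c34 > 0" using F3 D_eqs(5)[of c34 v u] by linarith
    have d35: "D u v c35 < 0" using F4 D_eqs(5)[of c35 v u] by linarith
    have e24: "D v u c24 > 0" using d24 D_eqs(4)[of u v c24] by linarith
    have e25: "D v u c25 < 0" using d25 D_eqs(4)[of u v c25] by linarith
    have e34: "D v u c34 < 0" using d34 D_eqs(4)[of u v c34] by linarith
    have e35: "D v u c35 > 0" using d35 D_eqs(4)[of u v c35] by linarith
    have R1: "D c24 c25 c34 < 0"
    proof (rule empty_lemma[OF c2 c4 c1 u(2) c24(1) c25(1) v(2) c24(2) c34(2) u(1) v(1) d24 d25 d34 F7])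
      show "D u c34 c24 < 0" using F5 D_eqs(1)[of c34 c24 u] by linarith
      show "K 2 \<inter> K 4 \<inter> K 1 = {}" using E124 by blast
    qed
    have R2: "D c35 c34 c25 < 0"
    proof (rule empty_lemma[OF c3 c5 c1 u(3) c35(1) c34(1) v(3) c35(2) c25(2) u(1) v(1) d35 d34 d25])
      show "D v c34 c35 > 0" using F8 D_eqs(3)[of v c35 c34] by linarith
      show "D u c25 c35 < 0" using F6 D_eqs(5)[of c35 c25 u] by linarith
      show "K 3 \<inter> K 5 \<inter> K 1 = {}" using E135 by blast
    qed
    have R3: "D c25 c35 c24 < 0"
    proof (rule empty_lemma[OF c5 c2 c1 v(3) c25(2) c35(2) u(2) c25(1) c24(1) v(1) u(1) e25 e35 e24])
      show "D u c35 c25 > 0" using F6 D_eqs(1)[of c35 c25 u] by linarith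
      show "D v c24 c25 < 0" using F7 D_eqs(3)[of v c25 c24] by linarith
      show "K 5 \<inter> K 2 \<inter> K 1 = {}" using E125 by blast
    qed
    have R4: "D c34 c24 c35 < 0"
    proof (rule empty_lemma[OF c4 c3 c1 v(2) c34(2) c24(2) u(3) c34(1) c35(1) v(1) u(1) e34 e24 e35])
      show "D u c24 c34 > 0" using F5 D_eqs(5)[of c34 c24 u] by linarith
      show "D v c35 c34 < 0" using F8 by simp
      show "K 4 \<inter> K 3 \<inter> K 1 = {}" using E134 by blast
    qed
    show False by (rule final_lemma[OF d25 d34 d24 d35 R1 R2 R3 R4])
  qed
  show ?thesis by (rule exI[of _ P], rule conjI[OF inj nK])
qed

end
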